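(* Let $d\ge0$ and let $G_d=\exp(\mathfrak g_d)$ be the adjoint group of $\mathfrak g_d$ acting on $V_d$. Then for every $n=0,1,\dots,d+1$, $$G_d.\,e_1z^n=\{x\in V_d:\mathrm{min.deg}\,x=n\}\ \bigl(=(V_d)_{(s)},\ s=2(d+1-n)\bigr).$$
   Context: $T=\mathbb C^2=\mathbb C\langle e_1,e_2\rangle$ with the standard action of $\mathfrak{sl}_2$; $V_d=T\otimes\mathbb C[z]/(z^{d+1})$ and $\mathfrak g_d=\mathfrak{sl}_2\otimes\mathbb C[z]/(z^{d+1})$ acting on $V_d$ by $(\xi z^a)(vz^b)=(\xi v)z^{a+b}$. For $x=\sum_m x_mz^m\in V_d$, $\mathrm{min.deg}\,x=\min\{m:x_m\neq0\}$ ($=d+1$ if $x=0$). $(V_d)_{(s)}$ is the set of $x\in V_d$ with $\dim\mathfrak g_d.x=s$. *)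

theory Defs
  imports "HOL-Analysis.Analysis" "HOL-Library.Function_Algebras"
begin

text \<open>Elements of V_d = T tensor C[z]/(z^(d+1)), T = C^2, are coefficient sequences
  x :: nat => complex^2 (x m is the coefficient of z^m) vanishing above degree d.
  Elements of g_d = sl_2 tensor C[z]/(z^(d+1)) are sequences of traceless 2x2 matrices
  vanishing above degree d.\<close>

type_synonym vd = "nat \<Rightarrow> complex ^ 2"
type_synonym gdel = "nat \<Rightarrow> complex ^ 2 ^ 2"

definition Vd :: "nat \<Rightarrow> vd set" where
  "Vd d = {x. \<forall>m>d. x m = 0}"

definition gd :: "nat \<Rightarrow> gdel set" where
  "gd d = {\<xi>. (\<forall>m>d. \<xi> m = 0) \<and> (\<forall>m. \<xi> m $ 1 $ 1 + \<xi> m $ 2 $ 2 = 0)}"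

text \<open>(xi z^a)(v z^b) = (xi v) z^(a+b), truncated modulo z^(d+1).\<close>
definition act :: "nat \<Rightarrow> gdel \<Rightarrow> vd \<Rightarrow> vd" where
  "act d \<xi> x = (\<lambda>m. if m \<le> d then (\<Sum>a\<le>m. \<xi> a *v x (m - a)) else 0)"

definition expact :: "nat \<Rightarrow> gdel \<Rightarrow> vd \<Rightarrow> vd" where
  "expact d \<xi> x = (\<lambda>m. \<Sum>k. (inverse (fact k) :: complex) *s (((act d \<xi>) ^^ k) x) m)"

text \<open>G_d = exp(g_d): the group generated by the exponentials exp(xi), xi in g_d
  (closed under inverses since exp(xi)^-1 = exp(-xi)).\<close>
inductive_set Gd :: "nat \<Rightarrow> (vd \<Rightarrow> vd) set" for d :: nat where
  Gd_id: "id \<in> Gd d"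
| Gd_exp: "g \<in> Gd d \<Longrightarrow> \<xi> \<in> gd d \<Longrightarrow> expact d \<xi> \<circ> g \<in> Gd d"

definition orbit :: "nat \<Rightarrow> vd \<Rightarrow> vd set" where
  "orbit d v = {g v | g. g \<in> Gd d}"

definition e1 :: "complex ^ 2" where
  "e1 = (\<chi> i. if i = 1 then 1 else 0)"

text \<open>e_1 z^n in V_d (equal to 0 when n > d).\<close>
definition e1z :: "nat \<Rightarrow> nat \<Rightarrow> vd" where
  "e1z d n = (\<lambda>m. if m = n \<and> n \<le> d then e1 else 0)"

definition mindeg :: "nat \<Rightarrow> vd \<Rightarrow> nat" where
  "mindeg d x = (if \<exists>m\<le>d. x m \<noteq> 0 then (LEAST m. x m \<noteq> 0) else d + 1)"

definition cdim :: "vd set \<Rightarrow> nat" where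
  "cdim S = vector_space.dim (\<lambda>(c::complex) (x::vd). (\<lambda>m. c *s x m)) S"

definition gdot :: "nat \<Rightarrow> vd \<Rightarrow> vd set" where
  "gdot d x = {act d \<xi> x | \<xi>. \<xi> \<in> gd d}"

definition Vs :: "nat \<Rightarrow> nat \<Rightarrow> vd set" where
  "Vs d s = {x \<in> Vd d. cdim (gdot d x) = s}"

end

theory Submission
  imports Defs
begin



lemma sum_fun_apply: "(sum f A) x = (\<Sum>a\<in>A. f a x)"
  by (induction A rule: infinite_finite_induct) auto

lemma mindeg_char:
  assumes "x \<in> Vd d" "n \<le> d + 1"
  shows "mindeg d x = n \<longleftrightarrow> (\<forall>j<n. x j = 0) \<and> (n \<le> d \<longrightarrow> x n \<noteq> 0)"
proof (cases "\<exists>m\<le>d. x m \<noteq> 0")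
  case True
  then obtain m where m: "m \<le> d" "x m \<noteq> 0" by blast
  have md: "mindeg d x = (LEAST m. x m \<noteq> 0)" unfolding mindeg_def by (rule if_P[OF True])
  have L: "(LEAST m. x m \<noteq> 0) \<le> m" by (rule Least_le) (rule m(2))
  have Lx: "x (LEAST m. x m \<noteq> 0) \<noteq> 0" by (rule LeastI) (rule m(2))
  have Lj: "\<And>j. j < (LEAST m. x m \<noteq> 0) \<Longrightarrow> x j = 0" using not_less_Least by blast
  show ?thesis
  proof
    assume "mindeg d x = n"
    then have "n = (LEAST m. x m \<noteq> 0)" using md by simp
    then show "(\<forall>j<n. x j = 0) \<and> (n \<le> d \<longrightarrow> x n \<noteq> 0)" using Lx Lj by blast
  next
    assume h: "(\<forall>j<n. x j = 0) \<and> (n \<le> d \<longrightarrow> x n \<noteq> 0)"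
    have "n \<le> m" using h m(2) not_le by blast
    then have "n \<le> d" using m(1) by linarith
    then have "x n \<noteq> 0" using h by blast
    then have "(LEAST m. x m \<noteq> 0) \<le> n" by (rule Least_le)
    moreover have "\<not> (LEAST m. x m \<noteq> 0) < n" using h Lx by blast
    ultimately show "mindeg d x = n" using md by linarith
  qed
next
  case False
  then have md: "mindeg d x = d + 1" unfolding mindeg_def by (rule if_not_P)
  have z: "\<And>j. j \<le> d \<Longrightarrow> x j = 0" using False by blast
  show ?thesis
  proof (cases "n = d + 1")
    case True then show ?thesis using md z by auto
  next
    case False
    then have "n \<le> d" using assms(2) by linarith
    then show ?thesis using md z by auto
  qed
qed

lemma mindeg_le: "mindeg d x \<le> d + 1"
proof (cases "\<exists>m\<le>d. x m \<noteq> 0")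
  case True
  then obtain m where m: "m \<le> d" "x m \<noteq> 0" by blast
  have md: "mindeg d x = (LEAST m. x m \<noteq> 0)" unfolding mindeg_def by (rule if_P[OF True])
  have L: "(LEAST m. x m \<noteq> 0) \<le> m" by (rule Least_le) (rule m(2))
  then show ?thesis using md m(1) by linarith
next
  case False
  then have "mindeg d x = d + 1" unfolding mindeg_def by (rule if_not_P)
  then show ?thesis by simp
qed

lemma mindeg_props:
  assumes "x \<in> Vd d"
  shows "(\<forall>j<mindeg d x. x j = 0) \<and> (mindeg d x \<le> d \<longrightarrow> x (mindeg d x) \<noteq> 0)"
  using mindeg_char[OF assms mindeg_le[of d x], THEN iffD1, OF refl] .

lemma act_Vd: "act d \<xi> x \<in> Vd d" by (simp add: act_def Vd_def)

lemma act_high: "m > d \<Longrightarrow> act d \<xi> x m = 0" by (simp add: act_def)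

lemma act_low: assumes "\<forall>j<n. x j = 0" "j < n" shows "act d \<xi> x j = 0"
  using assms by (simp add: act_def)

lemma act_n: assumes "\<forall>j<n. x j = 0" "n \<le> d" shows "act d \<xi> x n = \<xi> 0 *v x n"
proof -
  have "(\<Sum>a\<le>n. \<xi> a *v x (n - a)) = (\<Sum>a\<le>n. if a = 0 then \<xi> 0 *v x n else 0)"
    using assms(1) by (intro sum.cong) auto
  also have "\<dots> = \<xi> 0 *v x n" by (simp add: sum.delta)
  finally show ?thesis using assms(2) unfolding act_def by simp
qed

lemma pow_low: assumes "\<forall>j<n. x j = 0" shows "\<forall>j<n. ((act d \<xi>) ^^ k) x j = 0"
proof (induction k)
  case 0 then show ?case using assms by simp
next
  case (Suc k) then show ?case using act_low[OF Suc] by simp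
qed

lemma pow_n: assumes "\<forall>j<n. x j = 0" "n \<le> d"
  shows "((act d \<xi>) ^^ k) x n = ((\<lambda>v. \<xi> 0 *v v) ^^ k) (x n)"
proof (induction k)
  case (Suc k)
  have "((act d \<xi>) ^^ Suc k) x n = act d \<xi> (((act d \<xi>) ^^ k) x) n" by simp
  also have "\<dots> = \<xi> 0 *v (((act d \<xi>) ^^ k) x n)"
    by (rule act_n[OF pow_low[OF assms(1)] assms(2)])
  also have "\<dots> = ((\<lambda>v. \<xi> 0 *v v) ^^ Suc k) (x n)" using Suc by simp
  finally show ?case .
qed simp

lemma pow_high: assumes "x \<in> Vd d" "m > d" shows "((act d \<xi>) ^^ k) x m = 0"
proof (cases k)
  case 0 then show ?thesis using assms by (simp add: Vd_def)
next
  case (Suc k') then show ?thesis using assms act_high by simp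
qed

lemma exp_zero_comp:
  assumes "\<And>k. ((act d \<xi>) ^^ k) x m = 0"
  shows "expact d \<xi> x m = 0"
  using assms by (simp add: expact_def)




lemma vsums:
  fixes f :: "nat \<Rightarrow> complex^2"
  assumes "\<And>i. (\<lambda>k. f k $ i) sums (L $ i)"
  shows "f sums L"
  using assms unfolding sums_def by (intro vec_tendstoI) (simp add: sum_component)

lemma exp_sums_c:
  fixes s P Q :: complex
  shows "(\<lambda>k. inverse (fact k) * (s^k * P + (-s)^k * Q)) sums (exp s * P + exp (-s) * Q)"
proof -
  have e: "\<And>x::complex. (\<lambda>k. inverse (fact k) * x^k) sums exp x"
  proof -
    fix x :: complex
    have "(\<lambda>n. x^n /\<^sub>R fact n) sums exp x" by (rule exp_converges)
    moreover have "\<And>n. x^n /\<^sub>R fact n = inverse (fact n) * x^n"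
      by (simp add: scaleR_conv_of_real field_simps)
    ultimately show "(\<lambda>k. inverse (fact k) * x^k) sums exp x" by simp
  qed
  have "(\<lambda>k. inverse (fact k) * s^k * P + inverse (fact k) * (-s)^k * Q) sums (exp s * P + exp (-s) * Q)"
    by (intro sums_add sums_mult2 e)
  then show ?thesis by (simp add: algebra_simps)
qed

lemma AA_lemma:
  fixes A :: "complex^2^2"
  assumes "A$1$1 + A$2$2 = 0"
  shows "A *v (A *v v) = (A$1$1*A$1$1 + A$1$2*A$2$1) *s v"
proof -
  have a: "A$2$2 = - A$1$1" using assms by (metis add.commute eq_neg_iff_add_eq_0)
  show ?thesis
    by (simp add: vec_eq_iff forall_2 matrix_vector_mult_def sum_2 a algebra_simps)
qed

lemma exp2_nonzero:
  fixes A :: "complex^2^2" and u :: "complex^2"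
  assumes tr: "A$1$1 + A$2$2 = 0" and u: "u \<noteq> 0"
  shows "(\<Sum>k. (inverse (fact k) :: complex) *s ((\<lambda>v. A *v v)^^k) u) \<noteq> 0"
proof -
  define c where "c = A$1$1*A$1$1 + A$1$2*A$2$1"
  have AA: "\<And>v. A *v (A *v v) = c *s v" unfolding c_def by (rule AA_lemma[OF tr])
  show ?thesis
  proof (cases "c = 0")
    case True
    have z: "((\<lambda>v. A *v v)^^(Suc (Suc j))) u = 0" for j
    proof (induction j)
      case 0 then show ?case using AA True by simp
    next
      case (Suc j) then show ?case by simp
    qed
    have fz: "(inverse (fact k) :: complex) *s ((\<lambda>v. A *v v)^^k) u = 0" if "k \<notin> {0,1}" for k
    proof -
      have "k = Suc (Suc (k - 2))" using that by auto
      then show ?thesis using z by (metis vector_smult_rzero)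
    qed
    have "(\<Sum>k. (inverse (fact k) :: complex) *s ((\<lambda>v. A *v v)^^k) u)
        = (\<Sum>k\<in>{0,1}. (inverse (fact k) :: complex) *s ((\<lambda>v. A *v v)^^k) u)"
      by (rule suminf_finite) (use fz in auto)
    also have "\<dots> = u + A *v u" by simp
    finally have eq: "(\<Sum>k. (inverse (fact k) :: complex) *s ((\<lambda>v. A *v v)^^k) u) = u + A *v u" .
    show ?thesis
    proof
      assume "(\<Sum>k. (inverse (fact k) :: complex) *s ((\<lambda>v. A *v v)^^k) u) = 0"
      then have h: "u + A *v u = 0" using eq by simp
      then have "A *v (u + A *v u) = 0" by simp
      then have "A *v u = 0" using AA True by (simp add: matrix_vector_right_distrib)
      then show False using h u by simp
    qed
  next
    case False
    define s where "s = csqrt c"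
    have ss: "s * s = c" unfolding s_def by (metis power2_csqrt power2_eq_square)
    have s0: "s \<noteq> 0" using ss False by auto
    define w where "w = A *v u"
    define p where "p = (1/2) *s (u + (1/s) *s w)"
    define q where "q = (1/2) *s (u - (1/s) *s w)"
    have Aw: "A *v w = c *s u" unfolding w_def by (rule AA)
    have Ap: "A *v p = s *s p"
      unfolding p_def using Aw s0 ss
      by (simp add: vector_scalar_commute matrix_vector_right_distrib vec_eq_iff forall_2 field_simps w_def[symmetric])
    have Aq: "A *v q = (-s) *s q"
      unfolding q_def using Aw s0 ss
      by (simp add: vector_scalar_commute matrix_vector_right_distrib matrix_vector_mult_diff_distrib vec_eq_iff forall_2 field_simps w_def[symmetric])
    have upq: "u = p + q" unfolding p_def q_def by (simp add: vec_eq_iff field_simps)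
    have pow: "((\<lambda>v. A *v v)^^k) u = (s^k) *s p + ((-s)^k) *s q" for k
    proof (induction k)
      case 0 then show ?case using upq by simp
    next
      case (Suc k)
      have "((\<lambda>v. A *v v)^^Suc k) u = A *v ((s^k) *s p + ((-s)^k) *s q)" using Suc by simp
      also have "\<dots> = s^k *s (A *v p) + (-s)^k *s (A *v q)"
        by (simp add: matrix_vector_right_distrib vector_scalar_commute)
      also have "\<dots> = (s^Suc k) *s p + ((-s)^Suc k) *s q"
        unfolding Ap Aq by (simp add: vec_eq_iff algebra_simps)
      finally show ?case .
    qed
    define E where "E = exp s"
    define F where "F = exp (-s)"
    have sm: "(\<lambda>k. (inverse (fact k) :: complex) *s ((\<lambda>v. A *v v)^^k) u) sums (E *s p + F *s q)"
    proof (rule vsums)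
      fix i
      show "(\<lambda>k. ((inverse (fact k) :: complex) *s ((\<lambda>v. A *v v)^^k) u) $ i) sums ((E *s p + F *s q) $ i)"
        using exp_sums_c[of s "p$i" "q$i"] unfolding pow E_def F_def by (simp add: algebra_simps)
    qed
    show ?thesis
    proof
      assume "(\<Sum>k. (inverse (fact k) :: complex) *s ((\<lambda>v. A *v v)^^k) u) = 0"
      then have h: "E *s p + F *s q = 0" using sums_unique[OF sm] by simp
      then have "A *v (E *s p + F *s q) = 0" by simp
      then have h2: "E *s (s *s p) + F *s ((-s) *s q) = 0"
        using Ap Aq by (simp add: vector_scalar_commute matrix_vector_right_distrib)
      have E0: "E \<noteq> 0" "F \<noteq> 0" unfolding E_def F_def by simp_all
      have "u $ i = 0" for i
      proof -
        have "(E *s p + F *s q) $ i = 0" using h by simp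
        then have a: "E * p$i + F * q$i = 0" by simp
        have "(E *s (s *s p) + F *s ((-s) *s q)) $ i = 0" using h2 by simp
        then have b: "E * (s * p$i) + F * (-s * q$i) = 0" by simp
        have "s * (E * p$i - F * q$i) = 0" using b by (simp add: algebra_simps)
        then have b': "E * p$i - F * q$i = 0" using s0 by simp
        have "2 * (E * p$i) = (E * p$i + F * q$i) + (E * p$i - F * q$i)" by simp
        then have "E * p$i = 0" using a b' by simp
        then have pi: "p$i = 0" using E0 by simp
        then have "q$i = 0" using a E0 by simp
        then show ?thesis using pi upq by simp
      qed
      then show False using u by (simp add: vec_eq_iff)
    qed
  qed
qed




definition Pn :: "nat \<Rightarrow> nat \<Rightarrow> vd \<Rightarrow> bool" where
  "Pn d n x \<longleftrightarrow> x \<in> Vd d \<and> (\<forall>j<n. x j = 0) \<and> (n \<le> d \<longrightarrow> x n \<noteq> 0)"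

lemma expact_pres:
  assumes xi: "\<xi> \<in> gd d" and P: "Pn d n x"
  shows "Pn d n (expact d \<xi> x)"
proof -
  have xV: "x \<in> Vd d" and low: "\<forall>j<n. x j = 0" using P by (auto simp: Pn_def)
  have V: "expact d \<xi> x \<in> Vd d"
    unfolding Vd_def using exp_zero_comp pow_high[OF xV] by blast
  have L: "\<forall>j<n. expact d \<xi> x j = 0"
    using exp_zero_comp pow_low[OF low] by blast
  have N: "expact d \<xi> x n \<noteq> 0" if nd: "n \<le> d"
  proof -
    have "expact d \<xi> x n = (\<Sum>k. (inverse (fact k) :: complex) *s ((\<lambda>v. \<xi> 0 *v v)^^k) (x n))"
      unfolding expact_def using pow_n[OF low nd] by simp
    moreover have "\<xi> 0 $ 1 $ 1 + \<xi> 0 $ 2 $ 2 = 0" using xi by (simp add: gd_def)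
    moreover have "x n \<noteq> 0" using P nd by (simp add: Pn_def)
    ultimately show ?thesis using exp2_nonzero[of "\<xi> 0" "x n"] by simp
  qed
  show ?thesis using V L N by (simp add: Pn_def)
qed

lemma Gd_pres: "g \<in> Gd d \<Longrightarrow> Pn d n x \<Longrightarrow> Pn d n (g x)"
proof (induction g rule: Gd.induct)
  case Gd_id then show ?case by simp
next
  case (Gd_exp g \<xi>) then show ?case using expact_pres by simp
qed

lemma e1_nz: "e1 \<noteq> 0"
proof
  assume "e1 = 0"
  then have "e1 $ 1 = 0" by simp
  then show False by (simp add: e1_def)
qed

lemma e1z_P: "Pn d n (e1z d n)"
  unfolding Pn_def Vd_def e1z_def using e1_nz by simp

lemma Pn_mindeg: "n \<le> d + 1 \<Longrightarrow> Pn d n x \<longleftrightarrow> x \<in> Vd d \<and> mindeg d x = n"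
  unfolding Pn_def using mindeg_char[of x d n] by blast

lemma orbit_sub:
  assumes "n \<le> d + 1"
  shows "orbit d (e1z d n) \<subseteq> {x \<in> Vd d. mindeg d x = n}"
proof
  fix y assume "y \<in> orbit d (e1z d n)"
  then obtain g where g: "g \<in> Gd d" "y = g (e1z d n)" by (auto simp: orbit_def)
  then have "Pn d n y" using Gd_pres e1z_P by blast
  then show "y \<in> {x \<in> Vd d. mindeg d x = n}" using Pn_mindeg[OF assms] by blast
qed




definition sh :: "nat \<Rightarrow> complex^2^2 \<Rightarrow> gdel" where
  "sh k N = (\<lambda>a. if a = k then N else 0)"

lemma act_sh: "act d (sh k N) y = (\<lambda>m. if m \<le> d \<and> k \<le> m then N *v y (m - k) else 0)"
proof
  fix m
  have "(\<Sum>a\<le>m. sh k N a *v y (m - a)) = (\<Sum>a\<le>m. if a = k then N *v y (m - k) else 0)"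
    by (intro sum.cong) (auto simp: sh_def)
  also have "\<dots> = (if k \<le> m then N *v y (m - k) else 0)" by (simp add: sum.delta)
  finally show "act d (sh k N) y m = (if m \<le> d \<and> k \<le> m then N *v y (m - k) else 0)"
    unfolding act_def by simp
qed

lemma act_zero: "act d \<xi> 0 = 0"
  unfolding act_def by (simp add: fun_eq_iff)

lemma act_zero': "act d \<xi> (\<lambda>a. 0) = (\<lambda>a. 0)"
  unfolding act_def by (simp add: fun_eq_iff)

lemma sh_gd: "N$1$1 + N$2$2 = 0 \<Longrightarrow> k \<le> d \<Longrightarrow> sh k N \<in> gd d"
  unfolding gd_def sh_def by simp

lemma expact_sh:
  assumes nil: "N ** N = 0"
  shows "expact d (sh k N) y = (\<lambda>m. y m + (if m \<le> d \<and> k \<le> m then N *v y (m - k) else 0))"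
proof
  fix m
  have aa: "act d (sh k N) (act d (sh k N) y) = 0"
    unfolding act_sh by (simp add: fun_eq_iff matrix_vector_mul_assoc nil)
  have z: "((act d (sh k N)) ^^ Suc (Suc j)) y = 0" for j
  proof (induction j)
    case 0 then show ?case using aa by simp
  next
    case (Suc j) then show ?case by (simp add: act_zero act_zero')
  qed
  have fz: "(inverse (fact j) :: complex) *s (((act d (sh k N)) ^^ j) y) m = 0" if "j \<notin> {0,1}" for j
  proof -
    have "j = Suc (Suc (j - 2))" using that by auto
    then have "((act d (sh k N)) ^^ j) y = 0" using z by metis
    then show ?thesis by simp
  qed
  have "expact d (sh k N) y m = (\<Sum>j\<in>{0,1}. (inverse (fact j) :: complex) *s (((act d (sh k N)) ^^ j) y) m)"
    unfolding expact_def by (rule suminf_finite) (use fz in auto)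
  also have "\<dots> = y m + act d (sh k N) y m" by simp
  finally show "expact d (sh k N) y m = y m + (if m \<le> d \<and> k \<le> m then N *v y (m - k) else 0)"
    unfolding act_sh by simp
qed

lemma orbit_id: "v \<in> orbit d v"
proof -
  have "id \<in> Gd d" by (rule Gd_id)
  then have "\<exists>g. v = g v \<and> g \<in> Gd d" by (intro exI[of _ id]) simp
  then show ?thesis unfolding orbit_def by simp
qed

lemma orbit_step: "y \<in> orbit d v \<Longrightarrow> \<xi> \<in> gd d \<Longrightarrow> expact d \<xi> y \<in> orbit d v"
proof -
  assume "y \<in> orbit d v" "\<xi> \<in> gd d"
  then obtain g where g: "g \<in> Gd d" "y = g v" by (auto simp: orbit_def)
  have "expact d \<xi> \<circ> g \<in> Gd d" using g(1) \<open>\<xi> \<in> gd d\<close> by (rule Gd_exp)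
  moreover have "expact d \<xi> y = (expact d \<xi> \<circ> g) v" using g(2) by simp
  ultimately have "\<exists>h. expact d \<xi> y = h v \<and> h \<in> Gd d" by blast
  then show ?thesis unfolding orbit_def by simp
qed

definition det2 :: "complex^2 \<Rightarrow> complex^2 \<Rightarrow> complex" where
  "det2 u v = u$1 * v$2 - u$2 * v$1"

lemma two_ne_one: "(2::2) \<noteq> 1" by simp

lemma nilp_exists:
  assumes D: "det2 u v \<noteq> 0"
  shows "\<exists>N::complex^2^2. N$1$1 + N$2$2 = 0 \<and> N ** N = 0 \<and> N *v u = v"
proof -
  define D where "D = det2 u v"
  define w1 where "w1 = v$2 / D"
  define w2 where "w2 = - v$1 / D"
  define N :: "complex^2^2" where "N = (\<chi> i j. v$i * (if j = 1 then w1 else w2))"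
  have Nc: "N$i$j = v$i * (if j = 1 then w1 else w2)" for i j unfolding N_def by simp
  have D0: "D \<noteq> 0" using assms D_def by simp
  have "w1 * u$1 + w2 * u$2 = (u$1 * v$2 - u$2 * v$1) / D"
    unfolding w1_def w2_def using D0 by (simp add: field_simps)
  also have "\<dots> = 1" using D0 unfolding D_def det2_def by simp
  finally have wu: "w1 * u$1 + w2 * u$2 = 1" .
  have wv: "w1 * v$1 + w2 * v$2 = 0"
    unfolding w1_def w2_def using D0 by (simp add: field_simps)
  have t: "N$1$1 + N$2$2 = 0" using wv by (simp add: Nc algebra_simps)
  have nn: "N ** N = 0"
  proof -
    have "(N ** N)$i$j = v$i * (if j = 1 then w1 else w2) * (w1 * v$1 + w2 * v$2)" for i j
      by (simp add: matrix_matrix_mult_def sum_2 Nc algebra_simps)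
    then show ?thesis using wv by (simp add: vec_eq_iff)
  qed
  have nu: "N *v u = v"
  proof -
    have "(N *v u)$i = v$i * (w1 * u$1 + w2 * u$2)" for i
      by (simp add: matrix_vector_mult_def sum_2 Nc algebra_simps)
    then show ?thesis using wu by (simp add: vec_eq_iff)
  qed
  show ?thesis using t nn nu by blast
qed

definition e2 :: "complex ^ 2" where
  "e2 = (\<chi> i. if i = 2 then 1 else 0)"

lemma e1_c: "e1$1 = 1" "e1$2 = 0" by (simp_all add: e1_def)
lemma e2_c: "e2$1 = 0" "e2$2 = 1" by (simp_all add: e2_def)

lemma zero_nilp: "(0::complex^2^2) ** 0 = 0" "(0::complex^2^2)$1$1 + (0::complex^2^2)$2$2 = 0"
  by (simp_all add: matrix_matrix_mult_def vec_eq_iff)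

lemma two_nilp:
  assumes u: "u \<noteq> 0"
  shows "\<exists>N1 N2::complex^2^2. N1$1$1 + N1$2$2 = 0 \<and> N1 ** N1 = 0 \<and> N2$1$1 + N2$2$2 = 0 \<and> N2 ** N2 = 0
           \<and> N1 *v u + N2 *v u = v"
proof (cases "det2 u v = 0")
  case False
  then obtain N where "N$1$1 + N$2$2 = 0 \<and> N ** N = 0 \<and> N *v u = v" using nilp_exists by blast
  then show ?thesis using zero_nilp by (intro exI[of _ N] exI[of _ 0]) simp
next
  case True
  define z where "z = (if u$2 \<noteq> 0 then e1 else e2)"
  have "u$1 \<noteq> 0 \<or> u$2 \<noteq> 0" using u by (auto simp: vec_eq_iff forall_2)
  then have dz: "det2 u z \<noteq> 0" unfolding z_def det2_def by (auto simp: e1_c e2_c)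
  have "det2 u (v - z) = det2 u v - det2 u z" unfolding det2_def by (simp add: algebra_simps)
  then have dvz: "det2 u (v - z) \<noteq> 0" using True dz by simp
  obtain N1 where N1: "N1$1$1 + N1$2$2 = 0 \<and> N1 ** N1 = 0 \<and> N1 *v u = z" using nilp_exists[OF dz] by blast
  obtain N2 where N2: "N2$1$1 + N2$2$2 = 0 \<and> N2 ** N2 = 0 \<and> N2 *v u = v - z" using nilp_exists[OF dvz] by blast
  show ?thesis using N1 N2 by (intro exI[of _ N1] exI[of _ N2]) simp
qed

lemma base_nilp:
  assumes w: "w \<noteq> 0"
  shows "\<exists>N1 N2::complex^2^2. N1$1$1 + N1$2$2 = 0 \<and> N1 ** N1 = 0 \<and> N2$1$1 + N2$2$2 = 0 \<and> N2 ** N2 = 0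
           \<and> (e1 + N1 *v e1) + N2 *v (e1 + N1 *v e1) = w"
proof (cases "w$2 = 0")
  case False
  have "det2 e1 (w - e1) \<noteq> 0" using False by (simp add: det2_def e1_c)
  then obtain N where "N$1$1 + N$2$2 = 0 \<and> N ** N = 0 \<and> N *v e1 = w - e1" using nilp_exists by blast
  then show ?thesis using zero_nilp by (intro exI[of _ N] exI[of _ 0]) simp
next
  case True
  then have w1: "w$1 \<noteq> 0" using w by (auto simp: vec_eq_iff forall_2)
  have "det2 e1 e2 \<noteq> 0" by (simp add: det2_def e1_c e2_c)
  then obtain N1 where N1: "N1$1$1 + N1$2$2 = 0 \<and> N1 ** N1 = 0 \<and> N1 *v e1 = e2" using nilp_exists by blast
  have "det2 (e1 + e2) (w - (e1 + e2)) \<noteq> 0" using True w1 by (simp add: det2_def e1_c e2_c algebra_simps)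
  then obtain N2 where N2: "N2$1$1 + N2$2$2 = 0 \<and> N2 ** N2 = 0 \<and> N2 *v (e1 + e2) = w - (e1 + e2)"
    using nilp_exists by blast
  show ?thesis using N1 N2 by (intro exI[of _ N1] exI[of _ N2]) simp
qed




lemma orbit_sup_aux:
  assumes P: "Pn d n x" and nd: "n \<le> d"
  shows "n + K \<le> d \<Longrightarrow> \<exists>y \<in> orbit d (e1z d n). y \<in> Vd d \<and> (\<forall>j \<le> n + K. y j = x j)"
proof (induction K)
  case 0
  have xV: "x \<in> Vd d" and low: "\<forall>j<n. x j = 0" and xn: "x n \<noteq> 0" using P nd by (auto simp: Pn_def)
  obtain N1 N2 where N: "N1$1$1 + N1$2$2 = 0" "N1 ** N1 = 0" "N2$1$1 + N2$2$2 = 0" "N2 ** N2 = 0"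
    "(e1 + N1 *v e1) + N2 *v (e1 + N1 *v e1) = x n" using base_nilp[OF xn] by blast
  define y1 where "y1 = expact d (sh 0 N1) (e1z d n)"
  define y2 where "y2 = expact d (sh 0 N2) y1"
  have o1: "y1 \<in> orbit d (e1z d n)" unfolding y1_def
    by (rule orbit_step[OF orbit_id sh_gd[OF N(1)]]) simp
  have o2: "y2 \<in> orbit d (e1z d n)" unfolding y2_def
    by (rule orbit_step[OF o1 sh_gd[OF N(3)]]) simp
  have y1e: "y1 m = e1z d n m + (if m \<le> d then N1 *v e1z d n m else 0)" for m
    unfolding y1_def expact_sh[OF N(2)] by simp
  have y2e: "y2 m = y1 m + (if m \<le> d then N2 *v y1 m else 0)" for m
    unfolding y2_def expact_sh[OF N(4)] by simp
  have V: "y2 \<in> Vd d" unfolding Vd_def using y1e y2e by (simp add: e1z_def)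
  have lowy: "y2 j = x j" if "j < n" for j using y1e y2e that low nd by (simp add: e1z_def)
  have ny: "y2 n = x n" using y1e y2e nd N(5) by (simp add: e1z_def)
  have "\<forall>j \<le> n + 0. y2 j = x j" using lowy ny by (metis add_0_right le_neq_implies_less)
  then show ?case using o2 V by blast
next
  case (Suc K)
  have xV: "x \<in> Vd d" and low: "\<forall>j<n. x j = 0" and xn: "x n \<noteq> 0" using P nd by (auto simp: Pn_def)
  obtain y where y: "y \<in> orbit d (e1z d n)" "y \<in> Vd d" "\<forall>j \<le> n + K. y j = x j"
    using Suc by auto
  define k where "k = Suc K"
  have kd: "k \<le> d" and k1: "1 \<le> k" and nkd: "n + k \<le> d" using Suc k_def by auto
  define u where "u = x n"
  have yn: "y n = u" using y(3) u_def by simp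
  have ylow: "y j = 0" if "j < n" for j using y(3) low that by simp
  obtain N1 N2 where N: "N1$1$1 + N1$2$2 = 0" "N1 ** N1 = 0" "N2$1$1 + N2$2$2 = 0" "N2 ** N2 = 0"
    "N1 *v u + N2 *v u = x (n + k) - y (n + k)" using two_nilp xn u_def by blast
  define y1 where "y1 = expact d (sh k N1) y"
  define y2 where "y2 = expact d (sh k N2) y1"
  have o1: "y1 \<in> orbit d (e1z d n)" unfolding y1_def
    by (rule orbit_step[OF y(1) sh_gd[OF N(1) kd]])
  have o2: "y2 \<in> orbit d (e1z d n)" unfolding y2_def
    by (rule orbit_step[OF o1 sh_gd[OF N(3) kd]])
  have y1e: "y1 m = y m + (if m \<le> d \<and> k \<le> m then N1 *v y (m - k) else 0)" for m
    unfolding y1_def expact_sh[OF N(2)] by simp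
  have y2e: "y2 m = y1 m + (if m \<le> d \<and> k \<le> m then N2 *v y1 (m - k) else 0)" for m
    unfolding y2_def expact_sh[OF N(4)] by simp
  have y1s: "y1 j = y j" if "j < n + k" for j
  proof -
    have "k \<le> j \<Longrightarrow> y (j - k) = 0" using ylow that by simp
    then show ?thesis using y1e[of j] by auto
  qed
  have y2s: "y2 j = y j" if "j < n + k" for j
  proof -
    have "k \<le> j \<Longrightarrow> y1 (j - k) = 0" using ylow that y1s by simp
    then show ?thesis using y2e[of j] y1s[OF that] by auto
  qed
  have y1n: "y1 n = u" using y1s[of n] yn k1 by simp
  have "y1 (n + k) = y (n + k) + N1 *v u" using y1e[of "n+k"] nkd yn by simp
  then have top: "y2 (n + k) = x (n + k)" using y2e[of "n+k"] nkd y1n N(5) by (simp add: algebra_simps)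
  have V: "y2 \<in> Vd d" unfolding Vd_def using y1e y2e y(2) by (simp add: Vd_def)
  have "\<forall>j \<le> n + Suc K. y2 j = x j"
  proof (intro allI impI)
    fix j assume "j \<le> n + Suc K"
    then have "j < n + k \<or> j = n + k" using k_def by auto
    then show "y2 j = x j"
    proof
      assume "j < n + k"
      then show ?thesis using y2s y(3) k_def by simp
    qed (use top in simp)
  qed
  then show ?case using o2 V by blast
qed

lemma orbit_sup:
  assumes "n \<le> d + 1"
  shows "{x \<in> Vd d. mindeg d x = n} \<subseteq> orbit d (e1z d n)"
proof
  fix x assume "x \<in> {x \<in> Vd d. mindeg d x = n}"
  then have P: "Pn d n x" using Pn_mindeg[OF assms] by blast
  then have xV: "x \<in> Vd d" by (simp add: Pn_def)
  show "x \<in> orbit d (e1z d n)"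
  proof (cases "n \<le> d")
    case True
    obtain y where y: "y \<in> orbit d (e1z d n)" "y \<in> Vd d" "\<forall>j \<le> n + (d - n). y j = x j"
      using orbit_sup_aux[OF P True, of "d - n"] True by auto
    have "y = x"
    proof
      fix j show "y j = x j"
      proof (cases "j \<le> d")
        case True then show ?thesis using y(3) \<open>n \<le> d\<close> by simp
      next
        case False then show ?thesis using y(2) xV by (simp add: Vd_def)
      qed
    qed
    then show ?thesis using y(1) by simp
  next
    case False
    then have n: "n = d + 1" using assms by simp
    have "x = e1z d n"
    proof
      fix j show "x j = e1z d n j"
      proof (cases "j \<le> d")
        case True then show ?thesis using P n by (simp add: Pn_def e1z_def)
      next
        case False then show ?thesis using xV n by (simp add: Vd_def e1z_def)
      qed
    qed
    then show ?thesis using orbit_id by simp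
  qed
qed




definition Fn :: "nat \<Rightarrow> nat \<Rightarrow> vd set" where
  "Fn d n = {y \<in> Vd d. \<forall>j<n. y j = 0}"

definition mat2 :: "complex \<Rightarrow> complex \<Rightarrow> complex \<Rightarrow> complex \<Rightarrow> complex^2^2" where
  "mat2 a b c e = (\<chi> i j. if i = 1 then (if j = 1 then a else b) else (if j = 1 then c else e))"

lemma mat2_c: "mat2 a b c e $1$1 = a" "mat2 a b c e $1$2 = b" "mat2 a b c e $2$1 = c" "mat2 a b c e $2$2 = e"
  by (simp_all add: mat2_def)

lemma mat2_mv: "mat2 a b c e *v u = (\<chi> i. if i = 1 then a * u$1 + b * u$2 else c * u$1 + e * u$2)"
  by (simp add: vec_eq_iff forall_2 matrix_vector_mult_def sum_2 mat2_c)

lemma solve_tl: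
  fixes u v :: "complex^2"
  assumes u: "u \<noteq> 0"
  shows "\<exists>B. B$1$1 + B$2$2 = 0 \<and> B *v u = v"
proof (cases "u$1 = 0")
  case False
  define a where "a = v$1 / u$1"
  let ?B = "mat2 a 0 ((v$2 + a * u$2) / u$1) (-a)"
  have "?B *v u = v" using False unfolding mat2_mv a_def by (simp add: vec_eq_iff forall_2 field_simps)
  then show ?thesis by (intro exI[of _ ?B]) (simp add: mat2_c)
next
  case True
  then have u2: "u$2 \<noteq> 0" using u by (auto simp: vec_eq_iff forall_2)
  let ?B = "mat2 (- v$2/u$2) (v$1/u$2) 0 (v$2/u$2)"
  have "?B *v u = v" using True u2 unfolding mat2_mv by (simp add: vec_eq_iff forall_2 field_simps)
  then show ?thesis by (intro exI[of _ ?B]) (simp add: mat2_c)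
qed

lemma act_add_xi: "act d (\<lambda>a. \<xi> a + \<eta> a) x = (\<lambda>m. act d \<xi> x m + act d \<eta> x m)"
  unfolding act_def by (simp add: fun_eq_iff matrix_vector_mult_add_rdistrib sum.distrib)

lemma act_zero_xi: "act d (\<lambda>a. 0) x = (\<lambda>m. 0)"
  unfolding act_def by (simp add: fun_eq_iff)

lemma gdot_aux:
  assumes P: "Pn d n x" and yF: "y \<in> Fn d n"
  shows "\<exists>\<xi>\<in>gd d. \<forall>m < n + K. act d \<xi> x m = y m"
proof (induction K)
  case 0
  have "(\<lambda>a. 0) \<in> gd d" by (simp add: gd_def)
  moreover have "\<forall>m < n + 0. act d (\<lambda>a. 0) x m = y m" using yF by (simp add: act_zero_xi Fn_def)
  ultimately show ?case by blast
next
  case (Suc K)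
  obtain \<xi> where xi: "\<xi> \<in> gd d" "\<forall>m < n + K. act d \<xi> x m = y m" using Suc by blast
  have xV: "x \<in> Vd d" and low: "\<forall>j<n. x j = 0" using P by (auto simp: Pn_def)
  have yV: "y \<in> Vd d" using yF by (simp add: Fn_def)
  show ?case
  proof (cases "n + K \<le> d")
    case False
    have "act d \<xi> x (n + K) = y (n + K)" using False act_high yV by (simp add: Vd_def)
    then have "\<forall>m < n + Suc K. act d \<xi> x m = y m" using xi(2) less_Suc_eq by auto
    then show ?thesis using xi(1) by blast
  next
    case True
    have xn: "x n \<noteq> 0" using P True by (simp add: Pn_def)
    obtain B where B: "B$1$1 + B$2$2 = 0" "B *v x n = y (n + K) - act d \<xi> x (n + K)"
      using solve_tl[OF xn] by blast
    define \<xi>' where "\<xi>' = (\<lambda>a. \<xi> a + sh K B a)"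
    have Kd: "K \<le> d" using True by simp
    have t: "\<xi> K $1$1 + \<xi> K $2$2 = 0" using xi(1) by (simp add: gd_def)
    have "\<xi> K $1$1 + B$1$1 + (\<xi> K $2$2 + B$2$2) = (\<xi> K $1$1 + \<xi> K $2$2) + (B$1$1 + B$2$2)"
      by (simp add: algebra_simps)
    then have t2: "\<xi> K $1$1 + B$1$1 + (\<xi> K $2$2 + B$2$2) = 0" using t B(1) by simp
    have g': "\<xi>' \<in> gd d" using xi(1) t2 Kd unfolding \<xi>'_def gd_def sh_def by auto
    have ae: "act d \<xi>' x m = act d \<xi> x m + (if m \<le> d \<and> K \<le> m then B *v x (m - K) else 0)" for m
      unfolding \<xi>'_def act_add_xi act_sh by simp
    have "\<forall>m < n + Suc K. act d \<xi>' x m = y m"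
    proof (intro allI impI)
      fix m assume m: "m < n + Suc K"
      show "act d \<xi>' x m = y m"
      proof (cases "m = n + K")
        case True
        then show ?thesis using ae[of m] B(2) \<open>n + K \<le> d\<close> by simp
      next
        case False
        then have "m < n + K" using m by simp
        moreover have "K \<le> m \<Longrightarrow> x (m - K) = 0" using low \<open>m < n + K\<close> by simp
        ultimately show ?thesis using ae[of m] xi(2) by auto
      qed
    qed
    then show ?thesis using g' by blast
  qed
qed

lemma gdot_eq:
  assumes P: "Pn d n x"
  shows "gdot d x = Fn d n"
proof
  have low: "\<forall>j<n. x j = 0" using P by (simp add: Pn_def)
  show "gdot d x \<subseteq> Fn d n"
    unfolding gdot_def Fn_def using act_Vd act_low[OF low] by blast
next
  show "Fn d n \<subseteq> gdot d x"
  proof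
    fix y assume yF: "y \<in> Fn d n"
    obtain \<xi> where xi: "\<xi> \<in> gd d" "\<forall>m < n + (d + 1). act d \<xi> x m = y m"
      using gdot_aux[OF P yF] by blast
    have yV: "y \<in> Vd d" using yF by (simp add: Fn_def)
    have "act d \<xi> x = y"
    proof
      fix m show "act d \<xi> x m = y m"
      proof (cases "m \<le> d")
        case True then show ?thesis using xi(2) by simp
      next
        case False then show ?thesis using act_high yV by (simp add: Vd_def)
      qed
    qed
    then show "y \<in> gdot d x" unfolding gdot_def using xi(1) by blast
  qed
qed




interpretation VS: vector_space "\<lambda>(c::complex) (x::vd). (\<lambda>m. c *s x m)"
  by unfold_locales (simp_all add: fun_eq_iff vector_add_ldistrib vector_sadd_rdistrib vector_smult_assoc)

definition bv :: "2 \<Rightarrow> nat \<Rightarrow> vd" where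
  "bv i m = (\<lambda>j. if j = m then axis i 1 else 0)"

lemma bv_c: "bv i m j $ i' = (if j = m \<and> i' = i then 1 else 0)"
  by (simp add: bv_def axis_def)

lemma bv_inj: "inj_on (\<lambda>(i, m). bv i m) X"
proof (rule inj_onI, clarify)
  fix i m i' m'
  assume h: "bv i m = bv i' m'"
  have "bv i m m $ i = 1" by (simp add: bv_c)
  then have "bv i' m' m $ i = 1" using h by simp
  then show "i = i' \<and> m = m'" by (simp add: bv_c split: if_splits)
qed

lemma dimF:
  assumes "n \<le> d + 1"
  shows "cdim (Fn d n) = 2 * (d + 1 - n)"
proof -
  define I where "I = (UNIV :: 2 set) \<times> {n..d}"
  define B where "B = (\<lambda>(i, m). bv i m) ` I"
  have fI: "finite I" unfolding I_def by simp
  have cI: "card I = 2 * (d + 1 - n)" unfolding I_def by (simp add: card_cartesian_product)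
  have cB: "card B = card I" unfolding B_def by (rule card_image[OF bv_inj])
  have fB: "finite B" unfolding B_def using fI by simp
  have sub: "B \<subseteq> Fn d n" unfolding B_def I_def Fn_def Vd_def by (auto simp: bv_def)
  have span: "Fn d n \<subseteq> VS.span B"
  proof
    fix y assume yF: "y \<in> Fn d n"
    define z where "z = (\<Sum>p\<in>I. (\<lambda>j. (y (snd p) $ (fst p)) *s bv (fst p) (snd p) j))"
    have zs: "z \<in> VS.span B" unfolding z_def
    proof (rule VS.span_sum)
      fix p assume "p \<in> I"
      then have "bv (fst p) (snd p) \<in> B" unfolding B_def by (auto intro!: image_eqI[of _ _ p] simp: case_prod_beta)
      then show "(\<lambda>j. (y (snd p) $ (fst p)) *s bv (fst p) (snd p) j) \<in> VS.span B"
        by (intro VS.span_scale VS.span_base)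
    qed
    have "z = y"
    proof
      fix j
      show "z j = y j"
      proof (subst vec_eq_iff, rule allI)
        fix i0
        have "z j $ i0 = (\<Sum>p\<in>I. y (snd p) $ fst p * (bv (fst p) (snd p) j $ i0))"
          unfolding z_def sum_fun_apply by (simp add: sum_component)
        also have "\<dots> = (\<Sum>p\<in>I. if p = (i0, j) then y j $ i0 else 0)"
          by (intro sum.cong) (auto simp: bv_c)
        also have "\<dots> = (if (i0, j) \<in> I then y j $ i0 else 0)" using fI by (simp add: sum.delta')
        also have "\<dots> = y j $ i0" using yF unfolding I_def Fn_def Vd_def by (auto simp: not_le)
        finally show "z j $ i0 = y j $ i0" .
      qed
    qed
    then show "y \<in> VS.span B" using zs by simp
  qed
  have ind: "VS.independent B"
  proof (rule VS.independent_if_scalars_zero[OF fB])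
    fix f x
    assume s: "(\<Sum>x\<in>B. (\<lambda>m. f x *s x m)) = 0" and x: "x \<in> B"
    then obtain i m where im: "(i, m) \<in> I" "x = bv i m" unfolding B_def by auto
    have "(\<Sum>x\<in>B. (\<lambda>m. f x *s x m)) = (\<Sum>p\<in>I. (\<lambda>j. f (bv (fst p) (snd p)) *s bv (fst p) (snd p) j))"
      unfolding B_def by (subst sum.reindex[OF bv_inj]) (simp add: case_prod_beta)
    then have "(\<Sum>p\<in>I. (\<lambda>j. f (bv (fst p) (snd p)) *s bv (fst p) (snd p) j)) m $ i = 0"
      using s by simp
    then have "(\<Sum>p\<in>I. f (bv (fst p) (snd p)) * (bv (fst p) (snd p) m $ i)) = 0"
      unfolding sum_fun_apply by (simp add: sum_component)
    moreover have "(\<Sum>p\<in>I. f (bv (fst p) (snd p)) * (bv (fst p) (snd p) m $ i))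
        = (\<Sum>p\<in>I. if p = (i, m) then f (bv i m) else 0)"
      by (intro sum.cong) (auto simp: bv_c)
    ultimately show "f x = 0" using im fI by (simp add: sum.delta')
  qed
  have "VS.dim (Fn d n) = card B" using VS.basis_card_eq_dim[OF sub span ind] by simp
  then show ?thesis unfolding cdim_def using cB cI by simp
qed

theorem corollary3p5:
  fixes d n :: nat
  assumes "n \<le> d + 1"
  shows "orbit d (e1z d n) = {x \<in> Vd d. mindeg d x = n}
       \<and> {x \<in> Vd d. mindeg d x = n} = Vs d (2 * (d + 1 - n))"
proof
  show "orbit d (e1z d n) = {x \<in> Vd d. mindeg d x = n}"
    using orbit_sub[OF assms] orbit_sup[OF assms] by blast
next
  have cd: "cdim (gdot d x) = 2 * (d + 1 - mindeg d x)" if xV: "x \<in> Vd d" for x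
  proof -
    have "Pn d (mindeg d x) x" using Pn_mindeg[OF mindeg_le] xV by blast
    then have "gdot d x = Fn d (mindeg d x)" by (rule gdot_eq)
    then show ?thesis using dimF[OF mindeg_le] by simp
  qed
  show "{x \<in> Vd d. mindeg d x = n} = Vs d (2 * (d + 1 - n))"
  proof (intro set_eqI iffI)
    fix x assume "x \<in> {x \<in> Vd d. mindeg d x = n}"
    then show "x \<in> Vs d (2 * (d + 1 - n))" using cd by (simp add: Vs_def)
  next
    fix x assume "x \<in> Vs d (2 * (d + 1 - n))"
    then have xV: "x \<in> Vd d" and c: "cdim (gdot d x) = 2 * (d + 1 - n)" by (auto simp: Vs_def)
    have "2 * (d + 1 - mindeg d x) = 2 * (d + 1 - n)" using c cd[OF xV] by simp
    then have "mindeg d x = n" using mindeg_le[of d x] assms by linarith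
    then show "x \<in> {x \<in> Vd d. mindeg d x = n}" using xV by simp
  qed
qed


end
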